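(* For all $a,b\in(0,\sqrt7)$, $$|b\sinh a-a\sinh b|\ge|a-b|\sqrt{(a\cosh a-\sinh a)(b\cosh b-\sinh b)}.$$ *)

theory Defs
  imports Complex_Main
begin

end

theory Submission
  imports Defs "HOL-Analysis.Analysis"
begin



lemma cosh_sums2: "(\<lambda>n. y^(2*n)/fact(2*n)) sums cosh (y::real)"
proof -
  have "(\<lambda>n. sum (\<lambda>i. if even i then y ^ i /\<^sub>R fact i else 0) {n*2..<n*2+2}) sums cosh y"
    by (rule sums_group[OF cosh_converges]) simp
  moreover have "sum (\<lambda>i. if even i then y ^ i /\<^sub>R fact i else 0) {n*2..<n*2+2} = y^(2*n)/fact(2*n)" for n
    by (simp add: mult.commute divide_inverse)
  ultimately show ?thesis by simp
qed

lemma sinh_sums2: "(\<lambda>n. y^(2*n+1)/fact(2*n+1)) sums sinh (y::real)"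
proof -
  have "(\<lambda>n. sum (\<lambda>i. if even i then 0 else y ^ i /\<^sub>R fact i) {n*2..<n*2+2}) sums sinh y"
    by (rule sums_group[OF sinh_converges]) simp
  moreover have "sum (\<lambda>i. if even i then 0 else y ^ i /\<^sub>R fact i) {n*2..<n*2+2} = y^(2*n+1)/fact(2*n+1)" for n
    by (simp add: mult.commute divide_inverse)
  ultimately show ?thesis by simp
qed

definition Q :: "real \<Rightarrow> real" where
 "Q y = 2*y* sinh y - (y^2/4+2)*cosh y + 2 - 3*y^2/4 - y^4/8"

lemma coeff_aux0: "A > 0 \<Longrightarrow> B > 0 \<Longrightarrow> F > 0 \<Longrightarrow> 2/(A*F) - 1/(4*F) - 2/(B*A*F) = (8*B - B*A - 8)/(4*(B*A*F)::real)"
  by (simp add: field_simps)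
lemma coeff_aux: "F > 0 \<Longrightarrow> x \<ge> 0 \<Longrightarrow> 2/((2*x+1)*F) - 1/(4*F) - 2/((2*x+2)*(2*x+1)*F) =
   (2*x+1)*(3-x)/(2*((2*x+2)*(2*x+1)*F)::real)"
proof -
  assume "F>0" "x\<ge>0"
  then have a: "2*x+1 > 0" "2*x+2 > 0" "F > 0" by auto
  have e: "(8*(2*x+2) - (2*x+2)*(2*x+1) - 8) = 2*((2*x+1)*(3-x))" by (simp add: algebra_simps)
  have h: "(2*N)/(4*D) = N/(2*D::real)" for N D by simp
  show ?thesis unfolding coeff_aux0[OF a] e h ..
qed

lemma coeff_id: "2/fact(2*n+1) - 1/(4*fact(2*n)) - 2/fact(2*n+2) =
   (2*real n+1)*(3-real n)/(2*fact(2*n+2)::real)"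
proof -
  have f1: "fact(2*n+1) = (2*real n+1) * fact(2*n)" by (simp add: algebra_simps)
  have f2: "fact(2*n+2) = (2*real n+2)*(2*real n+1) * fact(2*n)"
    by (simp add: algebra_simps)
  show ?thesis unfolding f1 f2 by (rule coeff_aux) auto
qed

lemma Q_sums: "(\<lambda>m. (2*real m+5)*(1-real m)/(2*fact(2*m+6)) * y^(2*m+6)) sums Q y"
proof -
  let ?t = "\<lambda>n. (2*real n+1)*(3-real n)/(2*fact(2*n+2)) * y^(2*n+2)"
  have c1: "(\<lambda>n. y^(2*n+2)/fact(2*n+2)) sums (cosh y - 1)"
    using cosh_sums2[of y] sums_Suc_iff[of "\<lambda>n. y^(2*n)/fact(2*n)"] by simp
  have s1: "(\<lambda>n. 2*y*(y^(2*n+1)/fact(2*n+1))) sums (2*y* sinh y)"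
    by (rule sums_mult[OF sinh_sums2])
  have c2: "(\<lambda>n. y^2/4*(y^(2*n)/fact(2*n))) sums (y^2/4*cosh y)"
    by (rule sums_mult[OF cosh_sums2])
  have c3: "(\<lambda>n. 2*(y^(2*n+2)/fact(2*n+2))) sums (2*(cosh y - 1))"
    by (rule sums_mult[OF c1])
  have "(\<lambda>n. 2*y*(y^(2*n+1)/fact(2*n+1)) - y^2/4*(y^(2*n)/fact(2*n)) - 2*(y^(2*n+2)/fact(2*n+2)))
     sums (2*y* sinh y - y^2/4*cosh y - 2*(cosh y - 1))"
    by (intro sums_diff s1 c2 c3)
  moreover have "2*y*(y^(2*n+1)/fact(2*n+1)) - y^2/4*(y^(2*n)/fact(2*n)) - 2*(y^(2*n+2)/fact(2*n+2))
      = ?t n" for n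
  proof -
    have "2*y*(y^(2*n+1)/fact(2*n+1)) - y^2/4*(y^(2*n)/fact(2*n)) - 2*(y^(2*n+2)/fact(2*n+2))
      = (2/fact(2*n+1) - 1/(4*fact(2*n)) - 2/fact(2*n+2)) * y^(2*n+2)"
      by (simp add: field_simps power_add power_mult power2_eq_square)
    then show ?thesis by (simp only: coeff_id)
  qed
  ultimately have "?t sums (Q y + 3*y^2/4 + y^4/8)"
    by (simp add: Q_def algebra_simps)
  then have "?t sums (Q y + 3*y^2/4 + y^4/8 - (\<Sum>i<2. ?t i) + (\<Sum>i<2. ?t i))"
    by (simp only: diff_add_cancel)
  then have "(\<lambda>i. ?t (i+2)) sums (Q y + 3*y^2/4 + y^4/8 - (\<Sum>i<2. ?t i))"
    by (rule sums_iff_shift[THEN iffD2])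
  moreover have "(\<Sum>i<2. ?t i) = 3*y^2/4 + y^4/8"
    by (simp add: numeral_eq_Suc)
  moreover have "?t (i+2) = (2*real i+5)*(1-real i)/(2*fact(2*i+6)) * y^(2*i+6)" for i
  proof -
    have e: "2*(i+2)+2 = 2*i+6" by simp
    have c: "(2*real (i+2)+1)*(3-real (i+2)) = (2*real i+5)*(1-real i)" by (simp add: algebra_simps)
    show ?thesis unfolding e c ..
  qed
  ultimately show ?thesis by simp
qed




lemma poly_ineq: "140*(k+2) \<le> 3*(2*k+12)*(2*k+9)*(k+1::nat)"
  by (simp add: algebra_simps)

lemma nat_bound: "(2*k+9)*(k+1)*(28^(k+2)*1000*5^k) \<le> 2*fact(2*k+10)*3^k"
proof (induction k)
  case 0
  then show ?case by (simp add: fact_numeral)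
next
  case (Suc k)
  let ?A = "28^(k+2)*1000*5^k :: nat" and ?B = "2*fact(2*k+10)*3^k :: nat"
  have l: "(2*Suc k+9)*(Suc k+1)*(28^(Suc k+2)*1000*5^(Suc k)) = (2*k+11)*(140*(k+2))*?A"
    by (simp add: algebra_simps)
  have r: "2*fact(2*Suc k+10)*3^(Suc k) = 3*(2*k+12)*(2*k+11)*?B"
  proof -
    have "2*Suc k+10 = Suc (Suc (2*k+10))" by simp
    moreover have "fact(Suc (Suc (2*k+10))) = (2*k+12)*((2*k+11)*fact(2*k+10))"
      by (simp only: fact_Suc) (simp add: algebra_simps)
    ultimately have "fact(2*Suc k+10) = (2*k+12)*(2*k+11)*fact(2*k+10)" by (simp add: mult.assoc)
    then show ?thesis by (simp add: algebra_simps)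
  qed
  have "(2*k+11)*(140*(k+2))*?A \<le> (2*k+11)*(3*(2*k+12)*(2*k+9)*(k+1))*?A"
    using poly_ineq by (intro mult_right_mono mult_left_mono) auto
  also have "\<dots> = 3*(2*k+12)*(2*k+11)*((2*k+9)*(k+1)*?A)" by (simp add: algebra_simps)
  also have "\<dots> \<le> 3*(2*k+12)*(2*k+11)*?B" using Suc.IH by (intro mult_left_mono) auto
  finally show ?case unfolding l r .
qed

lemma term_bound:
  assumes "m \<ge> 2" "0 \<le> y" "y^2 \<le> (28::real)"
  shows "(2*real m+5)*(real m - 1)/(2*fact(2*m+6)) * y^(2*m+6) \<le> y^6/1000*(3/5)^(m-2)"
proof -
  obtain k where k: "m = k+2" using assms(1) by (metis add.commute le_Suc_ex)
  have yp: "y^(2*m+6) \<le> 28^m * y^6"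
  proof -
    have "y^(2*m+6) = (y^2)^m * y^6" by (simp add: power_add power_mult)
    also have "\<dots> \<le> 28^m * y^6" using assms by (intro mult_right_mono power_mono) auto
    finally show ?thesis .
  qed
  have nb: "real ((2*k+9)*(k+1)*(28^(k+2)*1000*5^k)) \<le> real (2*fact(2*k+10)*3^k)"
    using nat_bound[of k] by linarith
  then have nb': "(2*real k+9)*(real k+1)*(28^(k+2)*1000*5^k) \<le> 2*fact(2*k+10)*3^k"
    by (simp only: of_nat_mult of_nat_add of_nat_power of_nat_numeral of_nat_fact of_nat_1)
  have c0: "(2*real m+5)*(real m - 1) \<ge> 0" using assms by simp
  have "(2*real m+5)*(real m - 1)/(2*fact(2*m+6)) * y^(2*m+6) \<le>
        (2*real m+5)*(real m - 1)/(2*fact(2*m+6)) * (28^m * y^6)"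
    using yp c0 by (intro mult_left_mono) auto
  also have "\<dots> = y^6 * ((2*real k+9)*(real k+1)*28^(k+2)/(2*fact(2*k+10)))"
    unfolding k by (simp add: algebra_simps)
  also have "\<dots> \<le> y^6 * ((3/5)^k/1000)"
  proof (rule mult_left_mono)
    have f: "(2::real)*fact(2*k+10) > 0" by simp
    have "(2*real k+9)*(real k+1)*28^(k+2)/(2*fact(2*k+10)) \<le> (3/5)^k/1000
       \<longleftrightarrow> (2*real k+9)*(real k+1)*28^(k+2)*1000*5^k \<le> 2*fact(2*k+10)*3^k"
      using f by (simp add: field_simps power_divide)
    moreover have "(2*real k+9)*(real k+1)*28^(k+2)*1000*5^k \<le> 2*fact(2*k+10)*3^k"
      using nb' by (simp only: mult.assoc)
    ultimately show "(2*real k+9)*(real k+1)*28^(k+2)/(2*fact(2*k+10)) \<le> (3/5)^k/1000"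
      by blast
  qed simp
  finally show ?thesis unfolding k by simp
qed

lemma Q_nonneg:
  assumes "0 \<le> y" "y^2 \<le> (28::real)"
  shows "0 \<le> Q y"
proof -
  let ?d = "\<lambda>m. (2*real m+5)*(1-real m)/(2*fact(2*m+6)) * y^(2*m+6)"
  let ?e = "\<lambda>m. (if m = 0 then y^6/288 else 0) - (if m < 2 then 0 else y^6/1000*(3/5)^(m-2))"
  have g: "(\<lambda>m. y^6/1000*(3/5)^m) sums (y^6/1000*(1/(1-3/5)))"
    by (intro sums_mult geometric_sums) simp
  let ?G = "\<lambda>m. if m < 2 then 0 else y^6/1000*(3/5)^(m-2)"
  have "(\<lambda>m. ?G (m+2)) sums (y^6/1000*(1/(1-3/5)))" using g by simp
  then have G: "?G sums (y^6/1000*(1/(1-3/5)))"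
    using sums_iff_shift[of ?G 2] by (simp add: numeral_eq_Suc)
  have s1: "(\<lambda>m. if m = 0 then y^6/288 else 0) sums (y^6/288)"
    using sums_single[of 0 "\<lambda>_. y^6/288"] by simp
  have E: "?e sums (y^6/288 - y^6/1000*(1/(1-3/5)))"
    by (rule sums_diff[OF s1 G])
  have le: "?e m \<le> ?d m" for m
  proof (cases "m < 2")
    case True
    then have "m = 0 \<or> m = 1" by auto
    then show ?thesis using assms by (auto simp: fact_numeral)
  next
    case False
    then have "(2*real m+5)*(real m - 1)/(2*fact(2*m+6)) * y^(2*m+6) \<le> y^6/1000*(3/5)^(m-2)"
      using term_bound[of m y] assms by auto
    moreover have "?d m = - ((2*real m+5)*(real m - 1)/(2*fact(2*m+6)) * y^(2*m+6))"
    proof -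
      have "1 - real m = -(real m - 1)" by simp
      then show ?thesis by (simp only:)
    qed
    ultimately show ?thesis using False by simp
  qed
  have "y^6/288 - y^6/1000*(1/(1-3/5)) \<le> Q y"
    by (rule sums_le[OF le E Q_sums])
  moreover have "0 \<le> y^6/288 - y^6/1000*(1/(1-3/5))" using assms by simp
  ultimately show ?thesis by linarith
qed



definition p :: "real \<Rightarrow> real" where "p x = x*cosh x - sinh x"
definition L :: "real \<Rightarrow> real" where
  "L x = (x^2* sinh x - 2*x*cosh x + 2* sinh x)/(x * p x)"
definition K :: "real \<Rightarrow> real" where
  "K x = x^2*((sinh x)^2 - x^2) - 2*(p x)^2"

lemma p_deriv: "(p has_real_derivative (x * sinh x)) (at x)"
  unfolding p_def by (rule derivative_eq_intros refl | simp)+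

lemma p_pos: assumes "x > 0" shows "p x > 0"
proof -
  obtain z where z: "0 < z" "z < x" "p x - p 0 = (x - 0) * (z * sinh z)"
    using MVT2[of 0 x p "\<lambda>t. t * sinh t"] p_deriv assms by blast
  have "p 0 = 0" by (simp add: p_def)
  then show ?thesis using z assms by simp
qed

lemma K_Q: "2 * K x = Q (2*x)"
  unfolding K_def Q_def p_def sinh_double cosh_double
  using cosh_square_eq[of x] by (simp add: algebra_simps power2_eq_square eval_nat_numeral)

lemma lng_deriv: assumes "x > 0"
  shows "((\<lambda>x. ln (p x / x^2)) has_real_derivative L x) (at x)"
proof -
  have pp: "p x > 0" using p_pos assms by simp
  have q: "((\<lambda>x. p x / x^2) has_real_derivative
        ((x * sinh x * x^2 - p x * (2*x)) / (x^2)^2)) (at x)"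
  proof -
    have "((\<lambda>x. p x / x^2) has_real_derivative
        ((x * sinh x * x^2 - (2*x) * p x) / (x^2)^Suc (Suc 0))) (at x)"
      by (rule DERIV_quotient[OF p_deriv]) (use assms in \<open>auto intro!: derivative_eq_intros\<close>)
    then show ?thesis by (simp add: mult.commute)
  qed
  have l: "(ln has_real_derivative 1 / (p x / x^2)) (at (p x / x^2))"
    by (rule DERIV_ln_divide) (use assms pp in simp)
  have "((\<lambda>x. ln (p x / x^2)) has_real_derivative
        (1 / (p x / x^2)) * ((x * sinh x * x^2 - p x * (2*x)) / (x^2)^2)) (at x)"
    by (rule DERIV_chain2[OF l q])
  moreover have "(1 / (p x / x^2)) * ((x * sinh x * x^2 - p x * (2*x)) / (x^2)^2) = (x^2 * sinh x - 2 * p x)/(x * p x)"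
    using assms pp by (simp add: field_simps power2_eq_square)
  moreover have "x^2 * sinh x - 2 * p x = x^2 * sinh x - 2*x*cosh x + 2 * sinh x"
    by (simp add: p_def)
  ultimately show ?thesis by (simp add: L_def)
qed

lemma N_deriv: "((\<lambda>x. x^2 * sinh x - 2*x*cosh x + 2 * sinh x) has_real_derivative x^2 * cosh x) (at x)"
proof -
  have "((\<lambda>x. x^2 * sinh x - 2*x*cosh x + 2 * sinh x) has_real_derivative
     (2*x * sinh x + x^2 * cosh x - (2 * cosh x + 2*x * sinh x) + 2 * cosh x)) (at x)"
    by (rule derivative_eq_intros refl)+ (simp add: algebra_simps)
  then show ?thesis by (simp add: algebra_simps)
qed

lemma D_deriv: "((\<lambda>x. x * p x) has_real_derivative (p x + x^2 * sinh x)) (at x)"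
proof -
  show ?thesis using DERIV_mult[OF DERIV_ident p_deriv, of x]
    by (simp add: power2_eq_square algebra_simps)
qed

lemma num_id: "x^2 * cosh x * (x * p x) - (p x + x^2 * sinh x) * (x^2 * sinh x - 2*x*cosh x + 2 * sinh x) = - K x"
proof -
  have e: "x^2 * cosh x * (x * p x) - (p x + x^2 * sinh x) * (x^2 * sinh x - 2*x*cosh x + 2 * sinh x) + K x
     = x^4*((cosh x)^2 - (sinh x)^2 - 1)"
    unfolding K_def p_def by (simp add: algebra_simps power2_eq_square eval_nat_numeral)
  show ?thesis using e cosh_square_eq[of x] by simp
qed

lemma L_deriv: assumes "x > 0"
  shows "(L has_real_derivative (- K x / (x^2 * (p x)^2))) (at x)"
proof -
  have pp: "p x > 0" using p_pos assms by simp
  have "(L has_real_derivative (x^2 * cosh x * (x * p x) - (p x + x^2 * sinh x) * (x^2 * sinh x - 2*x*cosh x + 2 * sinh x)) / (x * p x)^Suc (Suc 0)) (at x)"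
    unfolding L_def[abs_def]
    by (rule DERIV_quotient[OF N_deriv D_deriv]) (use pp assms in simp)
  moreover have "x * p x * (x * p x) = x^2 * (p x)^2" by (simp add: power2_eq_square)
  ultimately show ?thesis unfolding num_id by (simp add: power_mult_distrib)
qed




lemma sinh_ge_self: assumes "(z::real) \<ge> 0" shows "z \<le> sinh z"
proof -
  have "sinh 0 - 0 \<le> sinh z - z"
  proof (rule DERIV_nonneg_imp_nondecreasing[OF assms])
    fix t :: real
    have "((\<lambda>t. sinh t - t) has_real_derivative cosh t - 1) (at t)"
      by (rule derivative_eq_intros refl | simp)+
    then show "\<exists>y. ((\<lambda>t. sinh t - t) has_real_derivative y) (at t) \<and> 0 \<le> y"
      using cosh_real_ge_1[of t] by auto
  qed
  then show ?thesis by simp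
qed

lemma logmean_gt: assumes "u > v" "v > 0"
  shows "sqrt (u* v) * (ln u - ln v) \<le> u - v"
proof -
  have u0: "u > 0" using assms by simp
  define m where "m = (ln u + ln v)/2"
  define z where "z = (ln u - ln v)/2"
  have z0: "z \<ge> 0" using assms u0 by (simp add: z_def)
  have "m + z = ln u" by (simp add: m_def z_def field_simps)
  then have eu: "u = exp (m+z)" using u0 by simp
  have "m - z = ln v" by (simp add: m_def z_def field_simps)
  then have ev: "v = exp (m-z)" using assms by simp
  have sq: "sqrt (u* v) = exp m"
  proof -
    have "u* v = (exp m)^2" unfolding eu ev by (simp add: exp_add[symmetric] power2_eq_square)
    then show ?thesis by simp
  qed
  have "u - v = 2 * exp m * sinh z"
    unfolding eu ev by (simp add: sinh_def exp_add exp_diff exp_minus field_simps)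
  moreover have "ln u - ln v = 2*z" by (simp add: z_def)
  ultimately show ?thesis unfolding sq using sinh_ge_self[OF z0] by simp
qed

lemma logmean: assumes "u > 0" "v > 0" "u \<noteq> v"
  shows "sqrt (u* v) \<le> (u - v)/(ln u - ln v)"
proof (cases "u > v")
  case True
  have "ln u > ln v" using True assms by simp
  then show ?thesis using logmean_gt[OF True assms(2)] by (simp add: field_simps)
next
  case False
  then have vu: "v > u" using assms by simp
  have "ln v > ln u" using vu assms by simp
  moreover have "(u - v)/(ln u - ln v) = (v - u)/(ln v - ln u)" by (metis minus_diff_eq minus_divide_divide)
  ultimately show ?thesis using logmean_gt[OF vu assms(1)] by (simp add: field_simps mult.commute)
qed

lemma K_nonneg: assumes "0 < x" "x < sqrt 7" shows "K x \<ge> 0"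
proof -
  have "x^2 < 7" using assms
    by (metis abs_of_pos real_sqrt_abs real_sqrt_less_iff)
  then have "(2*x)^2 \<le> 28" by (simp add: power_mult_distrib)
  then have "Q (2*x) \<ge> 0" using Q_nonneg[of "2*x"] assms by simp
  then show ?thesis using K_Q[of x] by simp
qed

lemma lng_concave: "concave_on {0<..<sqrt 7} (\<lambda>x. ln (p x / x^2))"
proof (rule f''_le0_imp_concave[where f' = L and f'' = "\<lambda>x. - K x / (x^2 * (p x)^2)"])
  show "convex {0<..<sqrt 7}" by simp
next
  fix x assume "x \<in> {0<..<sqrt 7}"
  then have x: "0 < x" "x < sqrt 7" by auto
  show "((\<lambda>x. ln (p x / x^2)) has_real_derivative L x) (at x)" by (rule lng_deriv[OF x(1)])
  show "(L has_real_derivative (- K x / (x^2 * (p x)^2))) (at x)" by (rule L_deriv[OF x(1)])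
  show "- K x / (x^2 * (p x)^2) \<le> 0" using K_nonneg[OF x] by (simp add: divide_nonneg_nonneg)
qed

definition gg :: "real \<Rightarrow> real" where "gg x = p x / x^2"

lemma f_deriv: assumes "x > 0" shows "((\<lambda>x. sinh x / x) has_real_derivative gg x) (at x)"
proof -
  have "((\<lambda>x. sinh x / x) has_real_derivative (cosh x * x - 1 * sinh x) / x^Suc (Suc 0)) (at x)"
    by (rule DERIV_quotient) (use assms in \<open>auto intro!: derivative_eq_intros\<close>)
  moreover have "(cosh x * x - 1 * sinh x) / x^Suc (Suc 0) = gg x"
    by (simp add: gg_def p_def power2_eq_square algebra_simps)
  ultimately show ?thesis by simp
qed

lemma gg_pos: "x > 0 \<Longrightarrow> gg x > 0"
  using p_pos by (simp add: gg_def)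




lemma main_lt:
  assumes a0: "0 < a" and ab: "a < b" and b7: "b < sqrt 7"
  shows "(b - a) * sqrt (gg a * gg b) \<le> sinh b / b - sinh a / a"
proof -
  define f where "f x = sinh x / x" for x :: real
  define \<alpha> where "\<alpha> = ln (gg a)"
  define \<beta> where "\<beta> = ln (gg b)"
  define k where "k = (\<beta> - \<alpha>) / (b - a)"
  have ga: "gg a > 0" using gg_pos a0 by simp
  have gb: "gg b > 0" using gg_pos a0 ab by simp
  have fd: "(f has_real_derivative gg t) (at t)" if "a \<le> t" for t
    unfolding f_def[abs_def] using f_deriv[of t] that a0 by simp
  have lower: "exp (\<alpha> + k * (t - a)) \<le> gg t" if t: "a \<le> t" "t \<le> b" for t
  proof -
    define s where "s = (t - a) / (b - a)"
    have s01: "0 \<le> s" "s \<le> 1" using t ab by (auto simp: s_def field_simps)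
    have st: "s * (b - a) = t - a" using ab by (simp add: s_def)
    have "(1 - s) * a + s * b = a + s * (b - a)" by (simp add: algebra_simps)
    then have ts: "(1 - s) *\<^sub>R a + s *\<^sub>R b = t" using st by simp
    have mem: "a \<in> {0<..<sqrt 7}" "b \<in> {0<..<sqrt 7}" using a0 ab b7 by auto
    have "(1 - s) * ln (p a / a^2) + s * ln (p b / b^2) \<le> ln (p t / t^2)"
      using concave_onD[OF lng_concave s01 mem] ts by simp
    moreover have "(1 - s) * ln (p a / a^2) + s * ln (p b / b^2) = \<alpha> + k * (t - a)"
    proof -
      have e1: "ln (p a / a^2) = \<alpha>" "ln (p b / b^2) = \<beta>" by (simp_all add: \<alpha>_def \<beta>_def gg_def)
      have "(1 - s) * \<alpha> + s * \<beta> = \<alpha> + s * (\<beta> - \<alpha>)" by (simp add: algebra_simps)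
      moreover have "s * (\<beta> - \<alpha>) = k * (t - a)" by (simp add: s_def k_def)
      ultimately show ?thesis unfolding e1 by simp
    qed
    ultimately have "\<alpha> + k * (t - a) \<le> ln (gg t)" by (simp add: gg_def)
    then have "exp (\<alpha> + k * (t - a)) \<le> exp (ln (gg t))" by simp
    then show ?thesis using gg_pos[of t] a0 t by simp
  qed
  show ?thesis
  proof (cases "k = 0")
    case True
    then have "\<beta> = \<alpha>" using ab by (simp add: k_def)
    then have gab: "gg b = gg a" using ga gb by (simp add: \<alpha>_def \<beta>_def)
    have "f a - a * gg a \<le> f b - b * gg a"
    proof (rule DERIV_nonneg_imp_nondecreasing[OF less_imp_le[OF ab]])
      fix t assume t: "a \<le> t" "t \<le> b"
      have "((\<lambda>t. f t - t * gg a) has_real_derivative gg t - 1 * gg a) (at t)"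
        by (intro DERIV_diff fd[OF t(1)] DERIV_cmult_right DERIV_ident)
      moreover have "gg a \<le> gg t" using lower[OF t] True ga by (simp add: \<alpha>_def)
      ultimately show "\<exists>y. ((\<lambda>t. f t - t * gg a) has_real_derivative y) (at t) \<and> 0 \<le> y"
        by auto
    qed
    moreover have "sqrt (gg a * gg b) = gg a" using gab ga by (simp add: real_sqrt_mult[symmetric])
    ultimately show ?thesis by (simp add: f_def algebra_simps)
  next
    case False
    define E where "E t = exp (\<alpha> + k * (t - a)) / k" for t
    have "f a - E a \<le> f b - E b"
    proof (rule DERIV_nonneg_imp_nondecreasing[OF less_imp_le[OF ab]])
      fix t assume t: "a \<le> t" "t \<le> b"
      have "(E has_real_derivative exp (\<alpha> + k * (t - a))) (at t)"
      proof -
        have h: "((\<lambda>t. \<alpha> + k * (t - a)) has_real_derivative k) (at t)"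
          by (auto intro!: derivative_eq_intros)
        have "(E has_real_derivative exp (\<alpha> + k * (t - a)) * k / k) (at t)"
          unfolding E_def[abs_def]
          by (rule DERIV_cdivide[OF DERIV_chain2[OF DERIV_exp h]])
        then show ?thesis using False by simp
      qed
      then have "((\<lambda>t. f t - E t) has_real_derivative gg t - exp (\<alpha> + k * (t - a))) (at t)"
        by (intro DERIV_diff fd[OF t(1)])
      then show "\<exists>y. ((\<lambda>t. f t - E t) has_real_derivative y) (at t) \<and> 0 \<le> y"
        using lower[OF t] by auto
    qed
    then have "E b - E a \<le> f b - f a" by simp
    moreover have "E b - E a = (b - a) * ((gg b - gg a) / (\<beta> - \<alpha>))"
    proof -
      have "\<alpha> + k * (b - a) = \<beta>" using ab by (simp add: k_def)
      then have "E b = gg b / k" using gb by (simp add: E_def \<beta>_def)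
      moreover have "E a = gg a / k" using ga by (simp add: E_def \<alpha>_def)
      moreover have "\<beta> - \<alpha> \<noteq> 0" using False by (auto simp: k_def)
      ultimately show ?thesis using ab by (simp add: k_def field_simps)
    qed
    moreover have "sqrt (gg b * gg a) \<le> (gg b - gg a) / (\<beta> - \<alpha>)"
    proof -
      have "gg b \<noteq> gg a" using False by (auto simp: k_def \<alpha>_def \<beta>_def)
      then show ?thesis unfolding \<alpha>_def \<beta>_def by (rule logmean[OF gb ga])
    qed
    ultimately have "(b - a) * sqrt (gg b * gg a) \<le> f b - f a"
      using ab mult_left_mono[of "sqrt (gg b * gg a)" "(gg b - gg a) / (\<beta> - \<alpha>)" "b - a"]
      by linarith
    then show ?thesis by (simp add: f_def mult.commute)
  qed
qed

theorem mainTheorem8: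
  fixes a b :: real
  assumes "0 < a" "a < sqrt 7" "0 < b" "b < sqrt 7"
  shows "\<bar>b * sinh a - a * sinh b\<bar> \<ge>
           \<bar>a - b\<bar> * sqrt ((a * cosh a - sinh a) * (b * cosh b - sinh b))"
proof -
  have gen: "\<bar>y * sinh x - x * sinh y\<bar> \<ge>
           \<bar>x - y\<bar> * sqrt ((x * cosh x - sinh x) * (y * cosh y - sinh y))"
    if xy: "0 < x" "x < y" "y < sqrt 7" for x y :: real
  proof -
    have m: "(y - x) * sqrt (gg x * gg y) \<le> sinh y / y - sinh x / x"
      by (rule main_lt[OF xy])
    have px: "x * cosh x - sinh x = x^2 * gg x" using xy by (simp add: gg_def p_def)
    have py: "y * cosh y - sinh y = y^2 * gg y" using xy by (simp add: gg_def p_def)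
    have sq: "sqrt ((x * cosh x - sinh x) * (y * cosh y - sinh y)) = x * y * sqrt (gg x * gg y)"
    proof -
      have "(x * cosh x - sinh x) * (y * cosh y - sinh y) = (x * y)^2 * (gg x * gg y)"
        unfolding px py by (simp add: power_mult_distrib)
      then show ?thesis using xy by (simp add: real_sqrt_mult)
    qed
    have e: "x * sinh y - y * sinh x = x * y * (sinh y / y - sinh x / x)"
      using xy by (simp add: field_simps)
    have "x * y * ((y - x) * sqrt (gg x * gg y)) \<le> x * y * (sinh y / y - sinh x / x)"
      using m xy by (intro mult_left_mono) auto
    moreover have "0 \<le> (y - x) * sqrt (gg x * gg y)" using xy gg_pos[of x] gg_pos[of y] by simp
    moreover have "\<bar>y * sinh x - x * sinh y\<bar> = x * sinh y - y * sinh x"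
      using e m xy calculation by (smt (verit) mult_nonneg_nonneg)
    moreover have "\<bar>x - y\<bar> = y - x" using xy by simp
    ultimately show ?thesis unfolding sq using e
      by (simp add: mult.assoc mult.left_commute)
  qed
  show ?thesis
  proof (cases a b rule: linorder_cases)
    case less
    then show ?thesis using gen[of a b] assms by simp
  next
    case equal
    then show ?thesis by simp
  next
    case greater
    then have "\<bar>a * sinh b - b * sinh a\<bar> \<ge>
           \<bar>b - a\<bar> * sqrt ((b * cosh b - sinh b) * (a * cosh a - sinh a))"
      using gen[of b a] assms by simp
    then show ?thesis by (simp add: abs_minus_commute mult.commute)
  qed
qed


end
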